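(* Let $L,T$ be positive integers, $p_1<p_2<\dots<p_L$ distinct primes, $N_i=p_i+2L+2T-2$ for $i\in[L]$, $q_0$ a prime power with $q_0\ge N_L$, and $q=q_0^{p_1p_2\cdots p_L}$. Let $A=[A_1\ \cdots\ A_L]\in\mathbb{F}_q^{a\times b}$ and $B$ with $B^{\intercal}=[B_1^{\intercal}\ \cdots\ B_L^{\intercal}]\in\mathbb{F}_q^{c\times b}$, where $A_i\in\mathbb{F}_q^{a\times b/L}$, $B_i\in\mathbb{F}_q^{b/L\times c}$. Then, in the FTP code described in the context, for each $i\in[L]$ the value $h(\alpha_i)=A_iB_i$ can be computed from the responses of the $N_i$ servers $1,\dots,N_i$ for index $i$, namely from $\{\operatorname{tr}_{\mathbb{F}_q/F_i}(v_jk_i(\alpha_j)h(\alpha_j)) : j\in\{L+1,\dots,L+N_i\}\}$.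
   Context: For a finite extension $\mathbb{E}/\mathbb{F}$ of degree $s$, $\operatorname{tr}_{\mathbb{E}/\mathbb{F}}(x)=x+x^{|\mathbb{F}|}+\cdots+x^{|\mathbb{F}|^{s-1}}$, applied entrywise to matrices. FTP code: let $n=N_L+L$. For $i\in[L]$ pick $\alpha_i\in\mathbb{F}_q$ with $[\mathbb{F}_{q_0}(\alpha_i):\mathbb{F}_{q_0}]=p_i$, and let $F_i=\mathbb{F}_{q_0}(\alpha_j: j\in[L],j\ne i)$. Pick distinct $\alpha_{L+1},\dots,\alpha_n\in\mathbb{F}_{q_0}$. Let $R_1,\dots,R_T\in\mathbb{F}_q^{a\times b/L}$, $S_1,\dots,S_T\in\mathbb{F}_q^{b/L\times c}$ be random matrices. Let $f,g$ be polynomials with matrix coefficients over $\mathbb{F}_q$ of degree at most $L+T-1$ with $f(\alpha_i)=A_i,g(\alpha_i)=B_i$ ($i\in[L]$), $f(\alpha_{L+j})=R_j$, $g(\alpha_{L+j})=S_j$ ($j\in[T]$), and $h=fg$. Server $j\in[N_L]$ holds $f(\alpha_{L+j}),g(\alpha_{L+j})$ and hence $h(\alpha_{L+j})$. Define $v_j=\prod_{i\in[n],i\ne j}(\alpha_j-\alpha_i)^{-1}$, $U_i=\{L+1,\dots,L+N_i\}$, and $k_i(x)=\prod_{j\in[n]\setminus(U_i\cup\{i\})}(x-\alpha_j)$. For each $i\in[L]$, server $j\in[N_i]$ sends $\operatorname{tr}_{\mathbb{F}_q/F_i}(v_{L+j}k_i(\alpha_{L+j})h(\alpha_{L+j}))$.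 *)

theory Defs
  imports "Jordan_Normal_Form.Matrix" "HOL-Computational_Algebra.Polynomial"
    "HOL-Computational_Algebra.Primes"
begin

definition is_subfield :: "'a::field set \<Rightarrow> bool" where
  "is_subfield F \<longleftrightarrow> 0 \<in> F \<and> 1 \<in> F \<and>
     (\<forall>x\<in>F. \<forall>y\<in>F. x + y \<in> F \<and> x * y \<in> F) \<and>
     (\<forall>x\<in>F. - x \<in> F \<and> inverse x \<in> F)"

definition field_gen :: "'a::field set \<Rightarrow> 'a set \<Rightarrow> 'a set" where
  "field_gen K S = \<Inter>{F. is_subfield F \<and> K \<subseteq> F \<and> S \<subseteq> F}"

definition ext_deg :: "'a::field set \<Rightarrow> 'a set \<Rightarrow> nat" where
  "ext_deg K E = (LEAST d. \<exists>bs. length bs = d \<and> set bs \<subseteq> E \<and>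
      (\<forall>e\<in>E. \<exists>cs. length cs = d \<and> set cs \<subseteq> K \<and> e = (\<Sum>l<d. cs ! l * bs ! l)))"

definition tr :: "'a::field set \<Rightarrow> 'a set \<Rightarrow> 'a \<Rightarrow> 'a" where
  "tr E K x = (\<Sum>k < ext_deg K E. x ^ (card K ^ k))"

text \<open>Evaluation of a polynomial with matrix coefficients, represented as a matrix of polynomials.\<close>
definition eval_pm :: "'a::comm_ring_1 \<Rightarrow> 'a poly mat \<Rightarrow> 'a mat" where
  "eval_pm x M = map_mat (\<lambda>e. poly e x) M"

text \<open>Column block A_i of A = [A_1 ... A_L] and row block B_i of B (B^T = [B_1^T ... B_L^T]); i is 1-based.\<close>
definition col_block :: "'a mat \<Rightarrow> nat \<Rightarrow> nat \<Rightarrow> 'a mat" where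
  "col_block A L i = mat (dim_row A) (dim_col A div L)
     (\<lambda>(r, s). A $$ (r, (i - 1) * (dim_col A div L) + s))"

definition row_block :: "'a mat \<Rightarrow> nat \<Rightarrow> nat \<Rightarrow> 'a mat" where
  "row_block B L i = mat (dim_row B div L) (dim_col B)
     (\<lambda>(r, s). B $$ ((i - 1) * (dim_row B div L) + r, s))"

definition ftp_F :: "'a::field set \<Rightarrow> (nat \<Rightarrow> 'a) \<Rightarrow> nat \<Rightarrow> nat \<Rightarrow> 'a set" where
  "ftp_F F0 \<alpha> L i = field_gen F0 (\<alpha> ` ({1..L} - {i}))"

definition ftp_v :: "(nat \<Rightarrow> 'a::field) \<Rightarrow> nat \<Rightarrow> nat \<Rightarrow> 'a" where
  "ftp_v \<alpha> n j = (\<Prod>i \<in> {1..n} - {j}. inverse (\<alpha> j - \<alpha> i))"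

definition ftp_k :: "(nat \<Rightarrow> 'a::field) \<Rightarrow> nat \<Rightarrow> nat \<Rightarrow> nat \<Rightarrow> nat \<Rightarrow> 'a \<Rightarrow> 'a" where
  "ftp_k \<alpha> L n Ni i x = (\<Prod>j \<in> {1..n} - ({L+1..L+Ni} \<union> {i}). (x - \<alpha> j))"

end

theory Submission
  imports Defs "HOL-Number_Theory.Residues"
begin
section \<open>Subfields\<close>

lemma sf_0: "is_subfield F \<Longrightarrow> 0 \<in> F" by (simp add: is_subfield_def)
lemma sf_1: "is_subfield F \<Longrightarrow> 1 \<in> F" by (simp add: is_subfield_def)
lemma sf_add: "is_subfield F \<Longrightarrow> x \<in> F \<Longrightarrow> y \<in> F \<Longrightarrow> x + y \<in> F" by (simp add: is_subfield_def)
lemma sf_mult: "is_subfield F \<Longrightarrow> x \<in> F \<Longrightarrow> y \<in> F \<Longrightarrow> x * y \<in> F" by (simp add: is_subfield_def)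
lemma sf_uminus: "is_subfield F \<Longrightarrow> x \<in> F \<Longrightarrow> - x \<in> F" by (simp add: is_subfield_def)
lemma sf_inverse: "is_subfield F \<Longrightarrow> x \<in> F \<Longrightarrow> inverse x \<in> F" by (simp add: is_subfield_def)
lemma sf_diff: "is_subfield F \<Longrightarrow> x \<in> F \<Longrightarrow> y \<in> F \<Longrightarrow> x - y \<in> F"
  using sf_add[of F x "-y"] sf_uminus[of F y] by simp
lemma sf_divide: "is_subfield F \<Longrightarrow> x \<in> F \<Longrightarrow> y \<in> F \<Longrightarrow> x / y \<in> F"
  using sf_mult[of F x "inverse y"] sf_inverse[of F y] by (simp add: divide_inverse)
lemma sf_power: "is_subfield F \<Longrightarrow> x \<in> F \<Longrightarrow> x ^ n \<in> F"
  by (induction n) (auto intro: sf_1 sf_mult)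
lemma sf_sum: "is_subfield F \<Longrightarrow> (\<And>a. a \<in> A \<Longrightarrow> f a \<in> F) \<Longrightarrow> sum f A \<in> F"
  by (induction A rule: infinite_finite_induct) (auto intro: sf_0 sf_add)
lemma sf_prod: "is_subfield F \<Longrightarrow> (\<And>a. a \<in> A \<Longrightarrow> f a \<in> F) \<Longrightarrow> prod f A \<in> F"
  by (induction A rule: infinite_finite_induct) (auto intro: sf_1 sf_mult)
lemma sf_UNIV: "is_subfield (UNIV :: 'a::field set)" by (simp add: is_subfield_def)

lemma field_gen_sf: "is_subfield (field_gen K S)"
  unfolding field_gen_def is_subfield_def by blast
lemma field_gen_K: "K \<subseteq> field_gen K S"
  unfolding field_gen_def by blast
lemma field_gen_S: "S \<subseteq> field_gen K S"
  unfolding field_gen_def by blast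
lemma field_gen_least: "is_subfield F \<Longrightarrow> K \<subseteq> F \<Longrightarrow> S \<subseteq> F \<Longrightarrow> field_gen K S \<subseteq> F"
  unfolding field_gen_def by blast

section \<open>Dimension and cardinality\<close>

definition spans :: "'a::field set \<Rightarrow> 'a list \<Rightarrow> 'a set \<Rightarrow> bool" where
  "spans M bs K \<longleftrightarrow> (\<forall>e\<in>K. \<exists>cs. length cs = length bs \<and> set cs \<subseteq> M \<and>
      e = (\<Sum>l<length bs. cs ! l * bs ! l))"

lemma ext_deg_alt: "ext_deg M K = (LEAST d. \<exists>bs. length bs = d \<and> set bs \<subseteq> K \<and> spans M bs K)"
  unfolding ext_deg_def spans_def
  by (rule arg_cong[where f = Least]) (rule ext, metis)

lemma exists_span:
  fixes M :: "'a::field set"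
  assumes "is_subfield M" "finite K"
  shows "\<exists>bs. set bs \<subseteq> K \<and> spans M bs K"
proof -
  obtain bs where bs: "set bs = K" "distinct bs" using finite_distinct_list[OF assms(2)] by blast
  have "spans M bs K"
    unfolding spans_def
  proof
    fix e assume "e \<in> K"
    then obtain k where k: "k < length bs" "bs ! k = e" using bs by (metis in_set_conv_nth)
    define cs where "cs = map (\<lambda>l. if l = k then 1 else (0::'a)) [0..<length bs]"
    have "set cs \<subseteq> M" unfolding cs_def using sf_0[OF assms(1)] sf_1[OF assms(1)] by auto
    moreover have "(\<Sum>l<length bs. cs ! l * bs ! l) = (\<Sum>l<length bs. if l = k then bs ! l else 0)"
      by (rule sum.cong) (auto simp: cs_def)
    moreover have "\<dots> = e" using k by (simp add: sum.delta')
    ultimately show "\<exists>cs. length cs = length bs \<and> set cs \<subseteq> M \<and> e = (\<Sum>l<length bs. cs ! l * bs ! l)"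
      by (intro exI[of _ cs]) (auto simp: cs_def)
  qed
  then show ?thesis using bs by auto
qed

definition skip :: "nat \<Rightarrow> nat \<Rightarrow> nat" where
  "skip k l = (if l < k then l else Suc l)"

lemma sum_skip:
  assumes "k < d"
  shows "(\<Sum>l<d. f l) = f k + (\<Sum>l<d - 1. f (skip k l))"
proof -
  have "(\<Sum>l<d. f l) = f k + (\<Sum>l\<in>{..<d} - {k}. f l)"
    using assms by (simp add: sum.remove)
  moreover have "{..<d} - {k} = skip k ` {..<d - 1}"
  proof
    show "{..<d} - {k} \<subseteq> skip k ` {..<d - 1}"
    proof
      fix l assume l: "l \<in> {..<d} - {k}"
      show "l \<in> skip k ` {..<d - 1}"
      proof (cases "l < k")
        case True then show ?thesis using l assms by (intro image_eqI[of _ _ l]) (auto simp: skip_def)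
      next
        case False then show ?thesis using l assms
          by (intro image_eqI[of _ _ "l - 1"]) (auto simp: skip_def)
      qed
    qed
  qed (use assms in \<open>auto simp: skip_def\<close>)
  moreover have "inj_on (skip k) {..<d - 1}"
    by (auto simp: inj_on_def skip_def split: if_splits)
  ultimately show ?thesis by (simp add: sum.reindex)
qed

lemma spans_remove:
  assumes M: "is_subfield M" and sp: "spans M bs K" and len: "length ds = length bs"
    and ds: "set ds \<subseteq> M" and z: "(\<Sum>l<length bs. ds ! l * bs ! l) = 0"
    and k: "k < length bs" "ds ! k \<noteq> 0"
  shows "spans M (map (\<lambda>l. bs ! skip k l) [0..<length bs - 1]) K"
  unfolding spans_def
proof
  let ?d = "length bs"
  fix e assume "e \<in> K"
  then obtain cs where cs: "length cs = ?d" "set cs \<subseteq> M" "e = (\<Sum>l<?d. cs ! l * bs ! l)"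
    using sp unfolding spans_def by blast
  have skipd: "l < ?d - 1 \<Longrightarrow> skip k l < ?d" for l using k by (auto simp: skip_def)
  define cs' where "cs' = map (\<lambda>l. cs ! skip k l - cs ! k * ds ! skip k l / ds ! k) [0..<?d - 1]"
  have "set cs' \<subseteq> M"
  proof
    fix x assume "x \<in> set cs'"
    then obtain l where l: "l < ?d - 1" "x = cs ! skip k l - cs ! k * ds ! skip k l / ds ! k"
      unfolding cs'_def by auto
    have "cs ! skip k l \<in> M" "cs ! k \<in> M" "ds ! skip k l \<in> M" "ds ! k \<in> M"
      using cs len ds skipd[OF l(1)] k nth_mem by (metis subsetD)+
    then show "x \<in> M" using l M by (auto intro!: sf_diff sf_divide sf_mult)
  qed
  moreover have "e = (\<Sum>l<?d - 1. cs' ! l * bs ! skip k l)"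
  proof -
    have z': "ds ! k * bs ! k = - (\<Sum>l<?d - 1. ds ! skip k l * bs ! skip k l)"
      using z sum_skip[OF k(1), of "\<lambda>l. ds ! l * bs ! l"] by (simp add: eq_neg_iff_add_eq_0)
    have bk: "bs ! k = - (\<Sum>l<?d - 1. ds ! skip k l * bs ! skip k l) / ds ! k"
      using z' k(2) by (simp add: field_simps)
    have "e = cs ! k * bs ! k + (\<Sum>l<?d - 1. cs ! skip k l * bs ! skip k l)"
      using cs(3) sum_skip[OF k(1), of "\<lambda>l. cs ! l * bs ! l"] by simp
    also have "\<dots> = (\<Sum>l<?d - 1. cs ! skip k l * bs ! skip k l) - (cs ! k / ds ! k) * (\<Sum>l<?d - 1. ds ! skip k l * bs ! skip k l)"
      unfolding bk by (simp add: divide_inverse)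
    also have "\<dots> = (\<Sum>l<?d - 1. cs ! skip k l * bs ! skip k l - (cs ! k / ds ! k) * (ds ! skip k l * bs ! skip k l))"
      by (simp add: sum_subtractf sum_distrib_left)
    also have "\<dots> = (\<Sum>l<?d - 1. (cs ! skip k l - cs ! k * ds ! skip k l / ds ! k) * bs ! skip k l)"
      by (rule sum.cong) (auto simp: algebra_simps)
    also have "\<dots> = (\<Sum>l<?d - 1. cs' ! l * bs ! skip k l)"
      by (rule sum.cong) (auto simp: cs'_def)
    finally show ?thesis .
  qed
  ultimately show "\<exists>cs. length cs = length (map (\<lambda>l. bs ! skip k l) [0..<?d - 1]) \<and> set cs \<subseteq> M \<and>
      e = (\<Sum>l<length (map (\<lambda>l. bs ! skip k l) [0..<?d - 1]).
             cs ! l * map (\<lambda>l. bs ! skip k l) [0..<?d - 1] ! l)"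
    by (intro exI[of _ cs']) (auto simp: cs'_def)
qed


lemma card_subfield:
  fixes M K :: "'a::{field,finite} set"
  assumes M: "is_subfield M" and K: "is_subfield K" and MK: "M \<subseteq> K"
  shows "card K = card M ^ ext_deg M K"
proof -
  define d where "d = ext_deg M K"
  have ex: "\<exists>d bs. length bs = d \<and> set bs \<subseteq> K \<and> spans M bs K"
    using exists_span[OF M, of K] by auto
  obtain bs where bs: "length bs = d" "set bs \<subseteq> K" "spans M bs K"
    using LeastI_ex[OF ex] unfolding d_def ext_deg_alt by blast
  have minimal: "\<not> (set bs' \<subseteq> K \<and> spans M bs' K)" if "length bs' < d" for bs'
    using not_less_Least[of "length bs'" "\<lambda>d. \<exists>bs. length bs = d \<and> set bs \<subseteq> K \<and> spans M bs K"]
      that unfolding d_def ext_deg_alt by blast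
  define \<phi> where "\<phi> cs = (\<Sum>l<d. cs ! l * bs ! l)" for cs
  define C where "C = {cs. set cs \<subseteq> M \<and> length cs = d}"
  have img: "\<phi> ` C = K"
  proof
    show "\<phi> ` C \<subseteq> K"
    proof
      fix x assume "x \<in> \<phi> ` C"
      then obtain cs where cs: "set cs \<subseteq> M" "length cs = d" "x = \<phi> cs" unfolding C_def by auto
      show "x \<in> K" unfolding cs(3) \<phi>_def
        by (rule sf_sum[OF K], rule sf_mult[OF K]) (use cs bs MK nth_mem in \<open>auto dest!: subsetD\<close>)
    qed
  next
    show "K \<subseteq> \<phi> ` C"
    proof
      fix e assume "e \<in> K"
      then obtain cs where "length cs = d" "set cs \<subseteq> M" "e = \<phi> cs"
        using bs(3) unfolding spans_def \<phi>_def bs(1)[symmetric] by blast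
      then show "e \<in> \<phi> ` C" unfolding C_def by auto
    qed
  qed
  have inj: "inj_on \<phi> C"
  proof (rule inj_onI, rule ccontr)
    fix cs cs' assume cs: "cs \<in> C" "cs' \<in> C" "\<phi> cs = \<phi> cs'" "cs \<noteq> cs'"
    have lens: "length cs = d" "length cs' = d" using cs(1,2) unfolding C_def by auto
    have "\<exists>k<d. cs ! k \<noteq> cs' ! k"
    proof (rule ccontr)
      assume "\<not> ?thesis"
      then have "cs = cs'" using lens by (intro nth_equalityI) auto
      then show False using cs(4) by simp
    qed
    then obtain k where k: "k < d" "cs ! k \<noteq> cs' ! k" by blast
    define ds where "ds = map (\<lambda>l. cs ! l - cs' ! l) [0..<d]"
    have dsM: "set ds \<subseteq> M"
    proof
      fix x assume "x \<in> set ds"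
      then obtain l where "l < d" "x = cs ! l - cs' ! l" unfolding ds_def by auto
      then show "x \<in> M" using cs(1,2) unfolding C_def by (auto intro!: sf_diff[OF M])
    qed
    have "(\<Sum>l<length bs. ds ! l * bs ! l) = \<phi> cs - \<phi> cs'"
      unfolding \<phi>_def bs(1) sum_subtractf[symmetric]
      by (rule sum.cong) (auto simp: ds_def algebra_simps)
    then have z: "(\<Sum>l<length bs. ds ! l * bs ! l) = 0" using cs(3) by simp
    have sp: "spans M (map (\<lambda>l. bs ! skip k l) [0..<length bs - 1]) K"
      by (rule spans_remove[OF M bs(3) _ dsM z]) (use k bs(1) in \<open>auto simp: ds_def\<close>)
    have "set (map (\<lambda>l. bs ! skip k l) [0..<length bs - 1]) \<subseteq> K"
    proof
      fix x assume "x \<in> set (map (\<lambda>l. bs ! skip k l) [0..<length bs - 1])"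
      then obtain l where l: "l < length bs - 1" "x = bs ! skip k l" by auto
      have "skip k l < length bs" using l(1) k bs(1) unfolding skip_def by auto
      then show "x \<in> K" using l(2) bs(2) nth_mem by blast
    qed
    then show False using minimal[of "map (\<lambda>l. bs ! skip k l) [0..<length bs - 1]"] sp k bs(1) by auto
  qed
  have "card K = card C" using card_image[OF inj] img by simp
  also have "card C = card M ^ d" unfolding C_def
    by (rule card_lists_length_eq) simp
  finally show ?thesis unfolding d_def .
qed

lemma card_subfield_ge2:
  fixes M :: "'a::field set"
  assumes "is_subfield M" "finite M"
  shows "card M \<ge> 2"
proof -
  have "{0, 1} \<subseteq> M" using assms sf_0 sf_1 by auto
  then have "card {0::'a, 1} \<le> card M" using assms(2) card_mono by blast
  then show ?thesis by simp
qed

lemma ext_deg_pos: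
  fixes M K :: "'a::{field,finite} set"
  assumes M: "is_subfield M" and K: "is_subfield K" and MK: "M \<subseteq> K"
  shows "ext_deg M K \<ge> 1"
proof (rule ccontr)
  assume "\<not> ?thesis"
  then have "card K = 1" using card_subfield[OF assms] by simp
  moreover have "card K \<ge> 2" using card_subfield_ge2[OF K] by simp
  ultimately show False by simp
qed

lemma ext_deg_self:
  fixes M :: "'a::{field,finite} set"
  assumes M: "is_subfield M"
  shows "ext_deg M M = 1"
proof -
  have "card M = card M ^ ext_deg M M" using card_subfield[OF M M] by simp
  moreover have "card M \<ge> 2" using card_subfield_ge2[OF M] by simp
  ultimately have "card M ^ ext_deg M M = card M ^ 1" by simp
  then show ?thesis using power_inject_exp[of "card M" "ext_deg M M" 1] \<open>card M \<ge> 2\<close> by linarith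
qed

lemma prod_primes_dvd:
  fixes A :: "nat set"
  assumes "finite A" "\<forall>x\<in>A. prime x \<and> x dvd e"
  shows "\<Prod>A dvd e"
  using assms
proof (induction A rule: finite_induct)
  case empty then show ?case by simp
next
  case (insert x A)
  have "coprime x (\<Prod>A)"
    by (rule prod_coprime_right) (use insert in \<open>auto intro!: primes_coprime\<close>)
  then show ?case using insert by (simp add: divides_mult)
qed

lemma gen_all_UNIV:
  fixes F0 :: "'a::{field,finite} set" and \<alpha> :: "nat \<Rightarrow> 'a" and p :: "nat \<Rightarrow> nat"
  assumes F0: "is_subfield F0" and cF0: "card F0 = q0" and q0: "q0 \<ge> 2"
    and q: "card (UNIV :: 'a set) = q0 ^ (\<Prod>l\<in>{1..L}. p l)"
    and pr: "\<forall>l\<in>{1..L}. prime (p l)" and injp: "inj_on p {1..L}"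
    and deg: "\<forall>l\<in>{1..L}. ext_deg F0 (field_gen F0 {\<alpha> l}) = p l"
  shows "field_gen F0 (\<alpha> ` {1..L}) = UNIV"
proof -
  define K where "K = field_gen F0 (\<alpha> ` {1..L})"
  have K: "is_subfield K" "F0 \<subseteq> K" unfolding K_def using field_gen_sf[of F0 "\<alpha> ` {1..L}"] field_gen_K[of F0 "\<alpha> ` {1..L}"] by auto
  define e where "e = ext_deg F0 K"
  have cK: "card K = q0 ^ e" unfolding e_def using card_subfield[OF F0 K(1) K(2)] cF0 by simp
  have dv: "p l dvd e" if l: "l \<in> {1..L}" for l
  proof -
    define G where "G = field_gen F0 {\<alpha> l}"
    have G: "is_subfield G" "F0 \<subseteq> G" unfolding G_def using field_gen_sf[of F0 "{\<alpha> l}"] field_gen_K[of F0 "{\<alpha> l}"] by auto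
    have GK: "G \<subseteq> K" unfolding G_def
      by (rule field_gen_least[OF K(1) K(2)]) (use l field_gen_S[of "\<alpha> ` {1..L}" F0] in \<open>auto simp: K_def\<close>)
    have cG: "card G = q0 ^ p l" using card_subfield[OF F0 G] deg l cF0 unfolding G_def by simp
    have "card K = card G ^ ext_deg G K" using card_subfield[OF G(1) K(1) GK] .
    then have "q0 ^ e = q0 ^ (p l * ext_deg G K)" using cK cG by (simp add: power_mult)
    then have "e = p l * ext_deg G K" using power_inject_exp[of q0] q0 by (simp del: power_inject_exp)
    then show ?thesis by simp
  qed
  have "\<Prod>(p ` {1..L}) dvd e"
    by (rule prod_primes_dvd) (use dv pr in auto)
  then have d1: "(\<Prod>l\<in>{1..L}. p l) dvd e" using prod.reindex[OF injp, of id] by simp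
  have "card (UNIV::'a set) = card K ^ ext_deg K UNIV"
    using card_subfield[OF K(1) sf_UNIV] by simp
  then have "q0 ^ (\<Prod>l\<in>{1..L}. p l) = q0 ^ (e * ext_deg K UNIV)" using q cK by (simp add: power_mult)
  then have "(\<Prod>l\<in>{1..L}. p l) = e * ext_deg K UNIV"
    using power_inject_exp[of q0] q0 by (simp del: power_inject_exp)
  then have "e dvd (\<Prod>l\<in>{1..L}. p l)" by simp
  then have "e = (\<Prod>l\<in>{1..L}. p l)" using d1 by (simp add: dvd_antisym)
  then have "card K = card (UNIV :: 'a set)" using cK q by simp
  then show ?thesis unfolding K_def[symmetric] by (simp add: card_subset_eq)
qed

lemma not_in_F0:
  fixes F0 :: "'a::{field,finite} set"
  assumes F0: "is_subfield F0" and "ext_deg F0 (field_gen F0 {x}) \<ge> 2"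
  shows "x \<notin> F0"
proof
  assume "x \<in> F0"
  then have "field_gen F0 {x} = F0"
    using field_gen_least[OF F0, of F0 "{x}"] field_gen_K[of F0 "{x}"] by auto
  then show False using assms ext_deg_self[OF F0] by simp
qed

lemma subfield_pow_card:
  fixes F :: "'a::field set"
  assumes F: "is_subfield F" "finite F" and c: "c \<in> F"
  shows "c ^ card F = c"
proof (cases "c = 0")
  case True
  have "0 \<in> F" using sf_0[OF F(1)] .
  then have "F \<noteq> {}" by blast
  then have "card F \<noteq> 0" using F(2) by simp
  then show ?thesis using True by simp
next
  case False
  have im: "(\<lambda>y. c * y) ` (F - {0}) = F - {0}"
  proof
    show "(\<lambda>y. c * y) ` (F - {0}) \<subseteq> F - {0}" using False sf_mult[OF F(1) c] by auto
    show "F - {0} \<subseteq> (\<lambda>y. c * y) ` (F - {0})"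
    proof
      fix y assume y: "y \<in> F - {0}"
      then have "y / c \<in> F - {0}" using False sf_divide[OF F(1) _ c] by auto
      moreover have "y = c * (y / c)" using False by simp
      ultimately show "y \<in> (\<lambda>y. c * y) ` (F - {0})" by blast
    qed
  qed
  have inj: "inj_on (\<lambda>y. c * y) (F - {0})" using False by (auto simp: inj_on_def)
  define P where "P = (\<Prod>y\<in>F-{0}. y)"
  have "(\<Prod>y\<in>F-{0}. c * y) = (\<Prod>y\<in>(\<lambda>y. c * y) ` (F-{0}). y)"
    using prod.reindex[OF inj, of id] by simp
  then have e1: "(\<Prod>y\<in>F-{0}. c * y) = P" using im unfolding P_def by simp
  have e2: "(\<Prod>y\<in>F-{0}. c * y) = c ^ card (F - {0}) * P"
    unfolding P_def prod.distrib by simp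
  have P0: "P \<noteq> 0" unfolding P_def using F(2) by simp
  have "c ^ card (F - {0}) * P = 1 * P" using e1 e2 by simp
  then have c1: "c ^ card (F - {0}) = 1" using P0 by (simp only: mult_cancel_right) simp
  have z: "0 \<in> F" using sf_0[OF F(1)] .
  have cd: "card F = Suc (card (F - {0}))" using card_Suc_Diff1[OF F(2) z] by simp
  show ?thesis unfolding cd power_Suc c1 by simp
qed

lemma subfield_pow_card_pow:
  fixes F :: "'a::field set"
  assumes F: "is_subfield F" "finite F" and c: "c \<in> F"
  shows "c ^ (card F ^ k) = c"
proof (induction k)
  case 0 then show ?case by simp
next
  case (Suc k)
  have "c ^ (card F ^ Suc k) = (c ^ (card F ^ k)) ^ card F" by (simp only: power_Suc2 power_mult)
  then show ?case using Suc subfield_pow_card[OF assms] by simp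
qed

lemma char_facts:
  fixes Fi :: "'a::{field,finite} set"
  assumes Fi: "is_subfield Fi" and r: "prime (r::nat)" and cU: "card (UNIV :: 'a set) = r ^ N"
  shows "prime CHAR('a)" "\<exists>j. card Fi = CHAR('a) ^ j"
proof -
  have pos: "CHAR('a) > 0" by (rule finite_imp_CHAR_pos) simp
  show pr: "prime CHAR('a)" using prime_CHAR_semidom[OF pos] .
  have "CHAR('a) dvd r ^ N" using CHAR_dvd_CARD[where 'a='a] cU by simp
  then have "CHAR('a) dvd r" using prime_dvd_power[OF pr] by blast
  then have cr: "CHAR('a) = r" using primes_dvd_imp_eq[OF pr r] by simp
  have "card (UNIV :: 'a set) = card Fi ^ ext_deg Fi UNIV"
    using card_subfield[OF Fi sf_UNIV] by simp
  moreover have "ext_deg Fi UNIV \<ge> 1" using ext_deg_pos[OF Fi sf_UNIV] by simp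
  moreover have "card Fi dvd card Fi ^ ext_deg Fi UNIV"
    using \<open>ext_deg Fi UNIV \<ge> 1\<close> by (intro dvd_power) auto
  ultimately have "card Fi dvd r ^ N" using cU by simp
  then obtain i where "card Fi = r ^ i" using divides_primepow_nat[OF r] by blast
  then show "\<exists>j. card Fi = CHAR('a) ^ j" using cr by blast
qed

context
  fixes Fi :: "'a::{field,finite} set" and j :: nat
  assumes Fi: "is_subfield Fi" and prC: "prime CHAR('a)" and cFi: "card Fi = CHAR('a) ^ j"
begin

lemma cFi_pos: "card Fi > 0"
  using card_subfield_ge2[OF Fi] by simp

lemma tr_add: "tr UNIV Fi (x + y) = tr UNIV Fi x + tr UNIV Fi y"
proof -
  have "(x + y) ^ (card Fi ^ k) = x ^ (card Fi ^ k) + y ^ (card Fi ^ k)" for k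
    by (rule freshmans_dream'[OF prC, of _ "j * k"]) (simp add: cFi power_mult)
  then show ?thesis unfolding tr_def by (simp add: sum.distrib)
qed

lemma tr_zero: "tr UNIV Fi 0 = 0"
  unfolding tr_def using cFi_pos by (simp add: power_0_left card_gt_0_iff)

lemma tr_sum: "tr UNIV Fi (\<Sum>a\<in>A. f a) = (\<Sum>a\<in>A. tr UNIV Fi (f a))"
  by (induction A rule: infinite_finite_induct) (auto simp: tr_zero tr_add)

lemma tr_uminus: "tr UNIV Fi (- x) = - tr UNIV Fi x"
proof -
  have "tr UNIV Fi x + tr UNIV Fi (- x) = 0" using tr_add[of x "-x"] tr_zero by simp
  then show ?thesis by (simp add: eq_neg_iff_add_eq_0 add.commute)
qed

lemma tr_scale: "c \<in> Fi \<Longrightarrow> tr UNIV Fi (c * x) = c * tr UNIV Fi x"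
  unfolding tr_def
  by (simp add: power_mult_distrib subfield_pow_card_pow[OF Fi _] sum_distrib_left)

lemma tr_nonzero: "\<exists>y. tr UNIV Fi y \<noteq> 0"
proof (rule ccontr)
  assume "\<not> ?thesis"
  then have all0: "\<forall>y. tr UNIV Fi y = 0" by simp
  define s where "s = ext_deg Fi UNIV"
  define Q where "Q = card Fi"
  have Q2: "Q \<ge> 2" unfolding Q_def using card_subfield_ge2[OF Fi] by simp
  have s1: "s \<ge> 1" unfolding s_def using ext_deg_pos[OF Fi sf_UNIV] by simp
  have cU: "card (UNIV :: 'a set) = Q ^ s" unfolding Q_def s_def using card_subfield[OF Fi sf_UNIV] by simp
  define TP :: "'a poly" where "TP = (\<Sum>k<s. Polynomial.monom 1 (Q ^ k))"
  have ev: "poly TP y = tr UNIV Fi y" for y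
    unfolding TP_def tr_def s_def Q_def by (simp add: poly_sum poly_monom)
  have injQ: "Q ^ k = Q ^ (s - 1) \<longleftrightarrow> k = s - 1" for k
    using Q2 power_inject_exp[of Q k "s - 1"] by (simp del: power_inject_exp)
  have "Polynomial.coeff TP (Q ^ (s - 1)) = (\<Sum>k<s. if k = s - 1 then 1 else 0)"
    unfolding TP_def coeff_sum coeff_monom by (rule sum.cong) (use injQ in auto)
  also have "\<dots> = 1" using s1 by (simp add: sum.delta')
  finally have "TP \<noteq> 0" by auto
  then have "card {y. poly TP y = 0} \<le> degree TP" by (rule card_poly_roots_bound)
  moreover have "degree TP \<le> Q ^ (s - 1)"
    unfolding TP_def
  proof (rule degree_sum_le)
    fix k assume "k \<in> {..<s}"
    then have "Q ^ k \<le> Q ^ (s - 1)" using Q2 by (intro power_increasing) auto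
    then show "degree (Polynomial.monom (1::'a) (Q ^ k)) \<le> Q ^ (s - 1)" using degree_monom_le le_trans by blast
  qed simp
  moreover have "{y. poly TP y = 0} = UNIV" using all0 ev by auto
  ultimately have "Q ^ s \<le> Q ^ (s - 1)" using cU by simp
  moreover have "Q ^ (s - 1) < Q ^ s" using Q2 s1 by (intro power_strict_increasing) auto
  ultimately show False by simp
qed

end

lemma poly_zero_many_roots:
  fixes D :: "'a::idom poly"
  assumes "finite R" "\<forall>x\<in>R. poly D x = 0" "degree D < card R"
  shows "D = 0"
proof (rule ccontr)
  assume D: "D \<noteq> 0"
  have "R \<subseteq> {x. poly D x = 0}" using assms(2) by auto
  then have "card R \<le> card {x. poly D x = 0}" using poly_roots_finite[OF D] card_mono by blast
  also have "\<dots> \<le> degree D" by (rule card_poly_roots_bound[OF D])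
  finally show False using assms(3) by simp
qed

lemma lagrange_sum_zero:
  fixes \<beta> :: "nat \<Rightarrow> 'a::field" and J :: "nat set" and P :: "'a poly"
  assumes J: "finite J" and inj: "inj_on \<beta> J" and deg: "degree P + 2 \<le> card J"
  shows "(\<Sum>j\<in>J. (\<Prod>i\<in>J-{j}. inverse (\<beta> j - \<beta> i)) * poly P (\<beta> j)) = 0"
proof -
  define n where "n = card J"
  define v where "v j = (\<Prod>i\<in>J-{j}. inverse (\<beta> j - \<beta> i))" for j
  define Lp where "Lp j = (\<Prod>i\<in>J-{j}. [:- \<beta> i, 1:])" for j
  have degL: "degree (Lp j) = n - 1" if "j \<in> J" for j
  proof -
    have "degree (Lp j) = (\<Sum>i\<in>J-{j}. degree [:- \<beta> i, 1:])"
      unfolding Lp_def by (rule degree_prod_eq_sum_degree) auto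
    also have "\<dots> = card (J - {j})" by simp
    also have "\<dots> = n - 1" unfolding n_def using that J by simp
    finally show ?thesis .
  qed
  have lcL: "Polynomial.coeff (Lp j) (n - 1) = 1" if "j \<in> J" for j
  proof -
    have "lead_coeff (Lp j) = 1" unfolding Lp_def lead_coeff_prod by simp
    then show ?thesis using degL[OF that] by simp
  qed
  have evL: "poly (Lp j) (\<beta> t) = (\<Prod>i\<in>J-{j}. \<beta> t - \<beta> i)" for j t
    unfolding Lp_def poly_prod by simp
  have evL0: "poly (Lp j) (\<beta> t) = 0" if "j \<in> J" "t \<in> J" "t \<noteq> j" for j t
    unfolding evL by (rule prod_zero) (use that J in \<open>auto intro!: bexI[of _ t]\<close>)
  have evL1: "v j * poly (Lp j) (\<beta> j) = 1" if "j \<in> J" for j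
  proof -
    have "v j * poly (Lp j) (\<beta> j) = (\<Prod>i\<in>J-{j}. inverse (\<beta> j - \<beta> i) * (\<beta> j - \<beta> i))"
      unfolding v_def evL prod.distrib by simp
    also have "\<dots> = (\<Prod>i\<in>J-{j}. 1)"
    proof (rule prod.cong)
      fix i assume "i \<in> J - {j}"
      then have "\<beta> j \<noteq> \<beta> i" using inj that by (auto simp: inj_on_def)
      then show "inverse (\<beta> j - \<beta> i) * (\<beta> j - \<beta> i) = 1" by simp
    qed simp
    finally show ?thesis by simp
  qed
  define R where "R = (\<Sum>j\<in>J. smult (v j * poly P (\<beta> j)) (Lp j))"
  have evR: "poly R (\<beta> t) = poly P (\<beta> t)" if t: "t \<in> J" for t
  proof -
    have "poly R (\<beta> t) = (\<Sum>j\<in>J. v j * poly P (\<beta> j) * poly (Lp j) (\<beta> t))"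
      unfolding R_def poly_sum by simp
    also have "\<dots> = v t * poly P (\<beta> t) * poly (Lp t) (\<beta> t)"
    proof -
      have "(\<Sum>j\<in>J-{t}. v j * poly P (\<beta> j) * poly (Lp j) (\<beta> t)) = 0"
        by (rule sum.neutral) (use evL0 t in auto)
      then show ?thesis using sum.remove[OF J t, of "\<lambda>j. v j * poly P (\<beta> j) * poly (Lp j) (\<beta> t)"] by simp
    qed
    also have "\<dots> = poly P (\<beta> t)" using evL1[OF t] by (simp add: algebra_simps)
    finally show ?thesis .
  qed
  have n2: "n \<ge> 2" using deg unfolding n_def by simp
  have degR: "degree R \<le> n - 1"
    unfolding R_def
  proof (rule degree_sum_le[OF J])
    fix j assume "j \<in> J"
    then show "degree (smult (v j * poly P (\<beta> j)) (Lp j)) \<le> n - 1"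
      using degL degree_smult_le le_trans by metis
  qed
  have "P - R = 0"
  proof (rule poly_zero_many_roots[of "\<beta> ` J"])
    show "finite (\<beta> ` J)" using J by simp
    show "\<forall>x\<in>\<beta> ` J. poly (P - R) x = 0" using evR by auto
    have "degree (P - R) \<le> max (degree P) (degree R)" by (rule degree_diff_le_max)
    also have "\<dots> < n" using degR deg n2 unfolding n_def by auto
    finally show "degree (P - R) < card (\<beta> ` J)" using card_image[OF inj] unfolding n_def by simp
  qed
  then have PR: "P = R" by simp
  have "Polynomial.coeff P (n - 1) = 0" using deg unfolding n_def by (intro coeff_eq_0) auto
  moreover have "Polynomial.coeff R (n - 1) = (\<Sum>j\<in>J. v j * poly P (\<beta> j))"
    unfolding R_def coeff_sum by (rule sum.cong) (use lcL in auto)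
  ultimately show ?thesis using PR unfolding v_def by simp
qed

definition spanp :: "'a::field set \<Rightarrow> 'a \<Rightarrow> nat \<Rightarrow> 'a set" where
  "spanp C a t = {y. \<exists>c. (\<forall>m. c m \<in> C) \<and> y = (\<Sum>m<t. c m * a ^ m)}"

lemma spanpI: "(\<forall>m. c m \<in> C) \<Longrightarrow> y = (\<Sum>m<t. c m * a ^ m) \<Longrightarrow> y \<in> spanp C a t"
  unfolding spanp_def by blast

context
  fixes C :: "'a::field set" and a :: 'a and t :: nat
  assumes C: "is_subfield C"
begin

lemma spanp_0: "0 \<in> spanp C a t"
  unfolding spanp_def using sf_0[OF C] by (intro CollectI exI[of _ "\<lambda>_. 0"]) auto

lemma spanp_add:
  assumes x: "x \<in> spanp C a t" and y: "y \<in> spanp C a t"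
  shows "x + y \<in> spanp C a t"
proof -
  obtain c where c: "\<forall>m. c m \<in> C" "x = (\<Sum>m<t. c m * a ^ m)" using x unfolding spanp_def by blast
  obtain d where d: "\<forall>m. d m \<in> C" "y = (\<Sum>m<t. d m * a ^ m)" using y unfolding spanp_def by blast
  have "x + y = (\<Sum>m<t. (c m + d m) * a ^ m)" unfolding c(2) d(2) by (simp add: sum.distrib algebra_simps)
  moreover have "\<forall>m. c m + d m \<in> C" using c(1) d(1) sf_add[OF C] by blast
  ultimately show ?thesis by (intro spanpI[of "\<lambda>m. c m + d m"])
qed

lemma spanp_scale:
  assumes x: "x \<in> C" and y: "y \<in> spanp C a t"
  shows "x * y \<in> spanp C a t"
proof -
  obtain d where d: "\<forall>m. d m \<in> C" "y = (\<Sum>m<t. d m * a ^ m)" using y unfolding spanp_def by blast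
  have "x * y = (\<Sum>m<t. (x * d m) * a ^ m)" unfolding d(2) by (simp add: sum_distrib_left algebra_simps)
  moreover have "\<forall>m. x * d m \<in> C" using x d(1) sf_mult[OF C] by blast
  ultimately show ?thesis by (intro spanpI[of "\<lambda>m. x * d m"])
qed

lemma spanp_uminus: "y \<in> spanp C a t \<Longrightarrow> - y \<in> spanp C a t"
  using spanp_scale[of "-1" y] sf_uminus[OF C sf_1[OF C]] by simp

lemma spanp_sum: "(\<And>i. i \<in> I \<Longrightarrow> f i \<in> spanp C a t) \<Longrightarrow> (\<Sum>i\<in>I. f i) \<in> spanp C a t"
  by (induction I rule: infinite_finite_induct) (auto intro: spanp_0 spanp_add)

lemma spanp_C: "t \<ge> 1 \<Longrightarrow> x \<in> C \<Longrightarrow> x \<in> spanp C a t"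
  unfolding spanp_def
proof (intro CollectI exI[of _ "\<lambda>m. if m = 0 then x else 0"] conjI)
  assume "t \<ge> 1" "x \<in> C"
  then show "\<forall>m. (if m = 0 then x else 0) \<in> C" using sf_0[OF C] by auto
  have "(\<Sum>m<t. (if m = 0 then x else 0) * a ^ m) = (\<Sum>m<t. if m = 0 then x else 0)"
    by (rule sum.cong) auto
  also have "\<dots> = x" using \<open>t \<ge> 1\<close> by (simp add: sum.delta)
  finally show "x = (\<Sum>m<t. (if m = 0 then x else 0) * a ^ m)" by simp
qed

lemma spanp_a: "t \<ge> 2 \<Longrightarrow> a \<in> spanp C a t"
  unfolding spanp_def
proof (intro CollectI exI[of _ "\<lambda>m. if m = 1 then 1 else 0"] conjI)
  assume "t \<ge> 2"
  then show "\<forall>m. (if m = 1 then 1 else 0) \<in> C" using sf_0[OF C] sf_1[OF C] by auto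
  have "(\<Sum>m<t. (if m = 1 then 1 else 0) * a ^ m) = (\<Sum>m<t. if m = 1 then a else 0)"
    by (rule sum.cong) auto
  also have "\<dots> = a" using \<open>t \<ge> 2\<close> by (simp add: sum.delta)
  finally show "a = (\<Sum>m<t. (if m = 1 then 1 else 0) * a ^ m)" by simp
qed

lemma spanp_shift:
  assumes at: "a ^ t \<in> spanp C a t" and y: "y \<in> spanp C a t"
  shows "a * y \<in> spanp C a t"
proof (cases t)
  case 0
  then show ?thesis using y spanp_0 unfolding spanp_def by simp
next
  case (Suc t')
  from y obtain c where c: "\<forall>m. c m \<in> C" "y = (\<Sum>m<t. c m * a ^ m)" unfolding spanp_def by blast
  define c' where "c' m = (if m = 0 then 0 else c (m - 1))" for m
  have "a * y = (\<Sum>m<Suc t'. c m * a ^ Suc m)"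
    unfolding c(2) Suc by (simp add: sum_distrib_left algebra_simps)
  also have "\<dots> = (\<Sum>m<t'. c m * a ^ Suc m) + c t' * a ^ t"
    using Suc by simp
  also have "(\<Sum>m<t'. c m * a ^ Suc m) = (\<Sum>m<t. c' m * a ^ m)"
    unfolding Suc sum.lessThan_Suc_shift by (simp add: c'_def)
  finally have eq: "a * y = (\<Sum>m<t. c' m * a ^ m) + c t' * a ^ t" .
  have "(\<Sum>m<t. c' m * a ^ m) \<in> spanp C a t"
    by (rule spanpI[of c']) (use c(1) sf_0[OF C] in \<open>auto simp: c'_def\<close>)
  moreover have "c t' * a ^ t \<in> spanp C a t" using spanp_scale[OF _ at] c(1) by simp
  ultimately show ?thesis unfolding eq by (rule spanp_add)
qed

lemma spanp_pow_mult:
  assumes at: "a ^ t \<in> spanp C a t" and y: "y \<in> spanp C a t"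
  shows "a ^ N * y \<in> spanp C a t"
proof (induction N)
  case 0 then show ?case using y by simp
next
  case (Suc N)
  then show ?case using spanp_shift[OF at Suc] by (simp add: mult.assoc)
qed

lemma spanp_mult:
  assumes at: "a ^ t \<in> spanp C a t" and x: "x \<in> spanp C a t" and y: "y \<in> spanp C a t"
  shows "x * y \<in> spanp C a t"
proof -
  from y obtain c where c: "\<forall>m. c m \<in> C" "y = (\<Sum>m<t. c m * a ^ m)" unfolding spanp_def by blast
  have "x * y = (\<Sum>m<t. c m * (a ^ m * x))" unfolding c(2) by (simp add: sum_distrib_left algebra_simps)
  also have "\<dots> \<in> spanp C a t"
    by (rule spanp_sum, rule spanp_scale) (use c(1) spanp_pow_mult[OF at x] in auto)
  finally show ?thesis .
qed

end

lemma spanp_mono: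
  assumes C': "is_subfield C'" and CC: "C \<subseteq> C'" and tt: "t \<le> t'"
  shows "spanp C a t \<subseteq> spanp C' a t'"
proof
  fix y assume "y \<in> spanp C a t"
  then obtain c where c: "\<forall>m. c m \<in> C" "y = (\<Sum>m<t. c m * a ^ m)" unfolding spanp_def by blast
  define c' where "c' m = (if m < t then c m else 0)" for m
  have "(\<Sum>m<t. c m * a ^ m) = (\<Sum>m<t'. c' m * a ^ m)"
    by (rule sum.mono_neutral_cong_left) (use tt in \<open>auto simp: c'_def\<close>)
  moreover have "\<forall>m. c' m \<in> C'" using c(1) CC sf_0[OF C'] by (auto simp: c'_def)
  ultimately show "y \<in> spanp C' a t'" unfolding spanp_def using c(2) by blast
qed

lemma pow_dependent:
  fixes F0 :: "'a::{field,finite} set" and a :: 'a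
  assumes F0: "is_subfield F0" and deg: "ext_deg F0 (field_gen F0 {a}) = p"
  shows "\<exists>t. 1 \<le> t \<and> t \<le> p \<and> a ^ t \<in> spanp F0 a t"
proof -
  define G where "G = field_gen F0 {a}"
  have G: "is_subfield G" "F0 \<subseteq> G" "a \<in> G"
    unfolding G_def using field_gen_sf[of F0 "{a}"] field_gen_K[of F0 "{a}"] field_gen_S[of "{a}" F0] by auto
  define q where "q = card F0"
  have q2: "q \<ge> 2" unfolding q_def using card_subfield_ge2[OF F0] by simp
  have cG: "card G = q ^ p" unfolding q_def using card_subfield[OF F0 G(1) G(2)] deg G_def by simp
  define Dom where "Dom = Pi\<^sub>E {..p} (\<lambda>_. F0)"
  have cD: "card Dom = q ^ Suc p" unfolding Dom_def q_def by (simp add: card_PiE)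
  define \<phi> where "\<phi> c = (\<Sum>m\<le>p. c m * a ^ m)" for c
  have img: "\<phi> ` Dom \<subseteq> G"
  proof
    fix y assume "y \<in> \<phi> ` Dom"
    then obtain c where c: "c \<in> Dom" "y = \<phi> c" by blast
    have "c m * a ^ m \<in> G" if "m \<in> {..p}" for m
      using c(1) that G sf_mult[OF G(1)] sf_power[OF G(1)] unfolding Dom_def by (auto simp: PiE_iff)
    then show "y \<in> G" unfolding c(2) \<phi>_def by (intro sf_sum[OF G(1)]) auto
  qed
  have "\<not> inj_on \<phi> Dom"
  proof
    assume "inj_on \<phi> Dom"
    then have "card Dom \<le> card G" using card_inj_on_le[OF _ img] by simp
    then have "q ^ Suc p \<le> q ^ p" using cD cG by simp
    moreover have "q ^ p < q ^ Suc p" using q2 by simp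
    ultimately show False by simp
  qed
  then obtain c c' where cc: "c \<in> Dom" "c' \<in> Dom" "\<phi> c = \<phi> c'" "c \<noteq> c'"
    unfolding inj_on_def by blast
  obtain m0 where m0: "m0 \<le> p" "c m0 \<noteq> c' m0"
  proof -
    have "\<exists>m\<in>{..p}. c m \<noteq> c' m"
    proof (rule ccontr)
      assume "\<not> ?thesis"
      then have "c = c'" using cc(1,2) unfolding Dom_def by (intro PiE_ext) auto
      then show False using cc(4) by simp
    qed
    then show ?thesis using that by auto
  qed
  define \<delta> where "\<delta> m = c m - c' m" for m
  have \<delta>F0: "\<delta> m \<in> F0" if "m \<le> p" for m
    using cc(1,2) that unfolding Dom_def \<delta>_def by (auto simp: PiE_iff intro!: sf_diff[OF F0])
  define Dp where "Dp = (\<Sum>m\<le>p. Polynomial.monom (\<delta> m) m)"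
  have coeffD: "Polynomial.coeff Dp k = (if k \<le> p then \<delta> k else 0)" for k
    unfolding Dp_def coeff_sum coeff_monom by (simp add: sum.delta')
  have coeffF0: "Polynomial.coeff Dp k \<in> F0" for k
    using \<delta>F0 sf_0[OF F0] unfolding coeffD by auto
  have evD: "poly Dp a = 0"
  proof -
    have "poly Dp a = (\<Sum>m\<le>p. \<delta> m * a ^ m)" unfolding Dp_def poly_sum poly_monom by simp
    also have "\<dots> = \<phi> c - \<phi> c'" unfolding \<phi>_def \<delta>_def sum_subtractf[symmetric] by (simp add: algebra_simps)
    finally show ?thesis using cc(3) by simp
  qed
  have Dp0: "Dp \<noteq> 0"
  proof
    assume "Dp = 0"
    then have "Polynomial.coeff Dp m0 = 0" by simp
    then show False using coeffD[of m0] m0 unfolding \<delta>_def by simp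
  qed
  define t where "t = degree Dp"
  have tp: "t \<le> p" unfolding t_def by (rule degree_le) (use coeffD in auto)
  define lc where "lc = Polynomial.coeff Dp t"
  have lc0: "lc \<noteq> 0" unfolding lc_def t_def using Dp0 by simp
  have "poly Dp a = (\<Sum>i\<le>t. Polynomial.coeff Dp i * a ^ i)" unfolding t_def by (rule poly_altdef)
  also have "\<dots> = (\<Sum>i<t. Polynomial.coeff Dp i * a ^ i) + lc * a ^ t"
    unfolding lc_def by (simp add: lessThan_Suc_atMost[symmetric])
  finally have eq: "(\<Sum>i<t. Polynomial.coeff Dp i * a ^ i) + lc * a ^ t = 0" using evD by simp
  have t1: "t \<ge> 1"
  proof (rule ccontr)
    assume "\<not> t \<ge> 1"
    then have "t = 0" by simp
    then show False using eq lc0 by simp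
  qed
  have "a ^ t = (\<Sum>i<t. (- Polynomial.coeff Dp i / lc) * a ^ i)"
  proof -
    have "lc * a ^ t = - (\<Sum>i<t. Polynomial.coeff Dp i * a ^ i)" using eq by (simp add: eq_neg_iff_add_eq_0 add.commute)
    then have "a ^ t = - (\<Sum>i<t. Polynomial.coeff Dp i * a ^ i) / lc" using lc0 by (simp add: field_simps)
    also have "\<dots> = (\<Sum>i<t. (- Polynomial.coeff Dp i / lc) * a ^ i)"
      by (simp add: sum_divide_distrib sum_negf[symmetric])
    finally show ?thesis .
  qed
  moreover have "\<forall>i. - Polynomial.coeff Dp i / lc \<in> F0"
    using coeffF0 sf_divide[OF F0] sf_uminus[OF F0] lc_def by metis
  ultimately have "a ^ t \<in> spanp F0 a t" by (intro spanpI[of "\<lambda>i. - Polynomial.coeff Dp i / lc"])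
  then show ?thesis using t1 tp by blast
qed

lemma span_UNIV:
  fixes F0 Fi :: "'a::{field,finite} set" and a :: 'a
  assumes F0: "is_subfield F0" and Fi: "is_subfield Fi" and sub: "F0 \<subseteq> Fi"
    and deg: "ext_deg F0 (field_gen F0 {a}) = p" and p2: "p \<ge> 2"
    and all: "\<And>E. is_subfield E \<Longrightarrow> Fi \<subseteq> E \<Longrightarrow> a \<in> E \<Longrightarrow> E = UNIV"
  shows "spanp Fi a p = UNIV"
proof -
  obtain t where t: "1 \<le> t" "t \<le> p" "a ^ t \<in> spanp F0 a t" using pow_dependent[OF F0 deg] by blast
  have "1 \<in> spanp F0 a t" using spanp_C[OF F0 t(1) sf_1[OF F0]] .
  then have "a ^ p * 1 \<in> spanp F0 a t" by (rule spanp_pow_mult[OF F0 t(3)])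
  then have ap: "a ^ p \<in> spanp Fi a p" using spanp_mono[OF Fi sub t(2)] by auto
  define S where "S = spanp Fi a p"
  have S1: "1 \<in> S" unfolding S_def using spanp_C[OF Fi _ sf_1[OF Fi]] p2 by simp
  have Smult: "x \<in> S \<Longrightarrow> y \<in> S \<Longrightarrow> x * y \<in> S" for x y
    unfolding S_def by (rule spanp_mult[OF Fi ap])
  have "is_subfield S"
    unfolding is_subfield_def
  proof (intro conjI ballI)
    show "0 \<in> S" unfolding S_def by (rule spanp_0[OF Fi])
    show "1 \<in> S" by (rule S1)
    fix x assume x: "x \<in> S"
    show "- x \<in> S" using x unfolding S_def by (rule spanp_uminus[OF Fi])
    show "inverse x \<in> S"
    proof (cases "x = 0")
      case True
      then show ?thesis unfolding S_def using spanp_0[OF Fi] by simp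
    next
      case False
      have "inj_on (\<lambda>y. x * y) S" using False by (auto simp: inj_on_def)
      moreover have "(\<lambda>y. x * y) ` S \<subseteq> S" using Smult x by auto
      ultimately have "(\<lambda>y. x * y) ` S = S" by (intro endo_inj_surj) auto
      then obtain y where y: "y \<in> S" "x * y = 1" using S1 by (metis imageE)
      then have "inverse x = y" using False by (simp add: field_simps inverse_unique)
      then show ?thesis using y by simp
    qed
  next
    fix x y assume "x \<in> S" "y \<in> S"
    then show "x + y \<in> S" "x * y \<in> S" unfolding S_def by (auto intro: spanp_add[OF Fi] spanp_mult[OF Fi ap])
  qed
  moreover have "Fi \<subseteq> S" unfolding S_def using spanp_C[OF Fi] p2 by auto
  moreover have "a \<in> S" unfolding S_def using spanp_a[OF Fi p2] .
  ultimately show ?thesis using all unfolding S_def by blast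
qed

lemma core:
  fixes \<alpha> :: "nat \<Rightarrow> 'a::{field,finite}" and Fi :: "'a set" and H :: "'a poly"
  assumes i: "1 \<le> i" "i \<le> L" and n: "L + Ni \<le> n" and inj: "inj_on \<alpha> {1..n}"
    and Fi: "is_subfield Fi" and prC: "prime CHAR('a)" and cFi: "card Fi = CHAR('a) ^ jj"
    and UFi: "\<forall>j\<in>{L+1..L+Ni}. \<alpha> j \<in> Fi"
    and sp: "spanp Fi (\<alpha> i) p = UNIV"
    and degH: "degree H \<le> dH" and pd: "p + dH \<le> Ni"
    and resp: "\<forall>j\<in>{L+1..L+Ni}. tr UNIV Fi (ftp_v \<alpha> n j * ftp_k \<alpha> L n Ni i (\<alpha> j) * poly H (\<alpha> j)) = 0"
  shows "poly H (\<alpha> i) = 0"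
proof -
  define U where "U = {L+1..L+Ni}"
  define J where "J = {1..n}"
  define Z where "Z = J - (U \<union> {i})"
  define kp where "kp = (\<Prod>j\<in>Z. [:- \<alpha> j, 1:])"
  define v where "v j = ftp_v \<alpha> n j" for j
  define k where "k x = ftp_k \<alpha> L n Ni i x" for x
  have kk: "k x = (\<Prod>j\<in>Z. x - \<alpha> j)" for x unfolding k_def ftp_k_def Z_def U_def J_def by simp
  have evk: "poly kp x = k x" for x unfolding kp_def kk poly_prod by simp
  have iU: "i \<notin> U" unfolding U_def using i by auto
  have UJ: "U \<union> {i} \<subseteq> J" unfolding U_def J_def using i n by auto
  have cZ: "card Z = n - Ni - 1"
  proof -
    have "card (U \<union> {i}) = Ni + 1" using iU unfolding U_def by simp
    moreover have "finite (U \<union> {i})" unfolding U_def by simp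
    ultimately show ?thesis unfolding Z_def using card_Diff_subset[OF _ UJ] unfolding J_def by simp
  qed
  have degk: "degree kp = n - Ni - 1"
  proof -
    have "degree kp = (\<Sum>j\<in>Z. degree [:- \<alpha> j, 1:])"
      unfolding kp_def by (rule degree_prod_eq_sum_degree) auto
    then show ?thesis using cZ by simp
  qed
  have J: "finite J" unfolding J_def by simp
  define Y where "Y = v i * k (\<alpha> i) * poly H (\<alpha> i)"
  have trY: "tr UNIV Fi (\<alpha> i ^ m * Y) = 0" if m: "m < p" for m
  proof -
    define P where "P = Polynomial.monom 1 m * kp * H"
    have d1: "degree (Polynomial.monom (1::'a) m * kp) \<le> m + degree kp"
      using degree_mult_le[of "Polynomial.monom (1::'a) m" kp] degree_monom_le[of "1::'a" m] by linarith
    have "degree P \<le> m + degree kp + degree H" unfolding P_def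
      using degree_mult_le[of "Polynomial.monom (1::'a) m * kp" H] d1 by linarith
    then have "degree P + 2 \<le> card J" using degk degH pd m n i unfolding J_def by simp
    then have lag: "(\<Sum>j\<in>J. (\<Prod>l\<in>J-{j}. inverse (\<alpha> j - \<alpha> l)) * poly P (\<alpha> j)) = 0"
      using lagrange_sum_zero[OF J inj[folded J_def]] by blast
    define f where "f j = \<alpha> j ^ m * (v j * k (\<alpha> j) * poly H (\<alpha> j))" for j
    have fe: "(\<Prod>l\<in>J-{j}. inverse (\<alpha> j - \<alpha> l)) * poly P (\<alpha> j) = f j" for j
      unfolding f_def P_def v_def ftp_v_def J_def by (simp add: evk poly_monom mult_ac)
    have "(\<Sum>j\<in>J. f j) = 0" using lag fe by simp
    moreover have "(\<Sum>j\<in>J. f j) = (\<Sum>j\<in>insert i U. f j)"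
    proof (rule sum.mono_neutral_right[OF J])
      show "insert i U \<subseteq> J" using UJ by simp
      show "\<forall>j\<in>J - insert i U. f j = 0"
      proof
        fix j assume j: "j \<in> J - insert i U"
        then have "j \<in> Z" unfolding Z_def by auto
        then have "k (\<alpha> j) = 0" unfolding kk using J unfolding Z_def
          by (intro prod_zero) (auto intro!: bexI[of _ j])
        then show "f j = 0" unfolding f_def by simp
      qed
    qed
    moreover have "(\<Sum>j\<in>insert i U. f j) = f i + (\<Sum>j\<in>U. f j)"
      using iU unfolding U_def by simp
    ultimately have fi: "f i = - (\<Sum>j\<in>U. f j)" by (simp add: eq_neg_iff_add_eq_0)
    have "tr UNIV Fi (f i) = - (\<Sum>j\<in>U. tr UNIV Fi (f j))"
      unfolding fi tr_uminus[OF Fi prC cFi] tr_sum[OF Fi prC cFi] ..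
    also have "(\<Sum>j\<in>U. tr UNIV Fi (f j)) = 0"
    proof (rule sum.neutral, rule ballI)
      fix j assume j: "j \<in> U"
      have "\<alpha> j ^ m \<in> Fi" using UFi j sf_power[OF Fi] unfolding U_def by blast
      then have "tr UNIV Fi (f j) = \<alpha> j ^ m * tr UNIV Fi (v j * k (\<alpha> j) * poly H (\<alpha> j))"
        unfolding f_def by (rule tr_scale[OF Fi prC cFi])
      also have "tr UNIV Fi (v j * k (\<alpha> j) * poly H (\<alpha> j)) = 0"
        using resp j unfolding U_def v_def k_def by blast
      finally show "tr UNIV Fi (f j) = 0" by simp
    qed
    finally show ?thesis unfolding f_def Y_def by simp
  qed
  have Y0: "Y = 0"
  proof (rule ccontr)
    assume Yn: "Y \<noteq> 0"
    obtain y0 where y0: "tr UNIV Fi y0 \<noteq> 0" using tr_nonzero[OF Fi prC cFi] by blast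
    have "y0 / Y \<in> spanp Fi (\<alpha> i) p" using sp by simp
    then obtain c where c: "\<forall>m. c m \<in> Fi" "y0 / Y = (\<Sum>m<p. c m * \<alpha> i ^ m)" unfolding spanp_def by blast
    have "y0 = (\<Sum>m<p. c m * (\<alpha> i ^ m * Y))"
    proof -
      have "y0 = (y0 / Y) * Y" using Yn by simp
      also have "\<dots> = (\<Sum>m<p. c m * (\<alpha> i ^ m * Y))" unfolding c(2) sum_distrib_right by (simp add: mult_ac)
      finally show ?thesis .
    qed
    then have "tr UNIV Fi y0 = (\<Sum>m<p. tr UNIV Fi (c m * (\<alpha> i ^ m * Y)))"
      by (simp only: tr_sum[OF Fi prC cFi])
    also have "\<dots> = (\<Sum>m<p. c m * tr UNIV Fi (\<alpha> i ^ m * Y))"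
      by (rule sum.cong) (use tr_scale[OF Fi prC cFi] c(1) in auto)
    also have "\<dots> = 0" using trY by simp
    finally show False using y0 by simp
  qed
  have iJ: "i \<in> J" using UJ by auto
  have neq: "\<alpha> i - \<alpha> l \<noteq> 0" if "l \<in> J - {i}" for l
  proof
    assume "\<alpha> i - \<alpha> l = 0"
    then have "\<alpha> i = \<alpha> l" by simp
    then have "i = l" using inj_onD[OF inj] iJ that unfolding J_def by blast
    then show False using that by simp
  qed
  have vi: "v i \<noteq> 0"
    unfolding v_def ftp_v_def J_def[symmetric] using neq J by simp
  have ki: "k (\<alpha> i) \<noteq> 0"
    unfolding kk Z_def using neq J by simp
  show ?thesis using Y0 vi ki unfolding Y_def by simp
qed

theorem lemma1:
  fixes L T a b c q0 n i :: nat and p N :: "nat \<Rightarrow> nat"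
    and F0 :: "'a::{field,finite} set" and \<alpha> :: "nat \<Rightarrow> 'a"
  assumes LT: "L > 0" "T > 0"
    and primes: "\<forall>l\<in>{1..L}. prime (p l)"
    and incr: "\<forall>l m. 1 \<le> l \<longrightarrow> l < m \<longrightarrow> m \<le> L \<longrightarrow> p l < p m"
    and N_def: "\<forall>l\<in>{1..L}. N l = p l + 2 * L + 2 * T - 2"
    and q0_pp: "\<exists>r m. prime (r::nat) \<and> m > 0 \<and> q0 = r ^ m"
    and q0_ge: "q0 \<ge> N L"
    and q: "card (UNIV :: 'a set) = q0 ^ (\<Prod>l\<in>{1..L}. p l)"
    and F0: "is_subfield F0" "card F0 = q0"
    and n_def: "n = N L + L"
    and alpha_deg: "\<forall>l\<in>{1..L}. ext_deg F0 (field_gen F0 {\<alpha> l}) = p l"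
    and alpha_F0: "\<forall>j\<in>{L+1..n}. \<alpha> j \<in> F0"
    and alpha_dist: "inj_on \<alpha> {L+1..n}"
    and dvd: "L dvd b"
    and i: "i \<in> {1..L}"
  shows "\<exists>Dec. \<forall>A B R S f g.
     A \<in> carrier_mat a b \<and> B \<in> carrier_mat b c \<and>
     (\<forall>j\<in>{1..T}. R j \<in> carrier_mat a (b div L) \<and> S j \<in> carrier_mat (b div L) c) \<and>
     f \<in> carrier_mat a (b div L) \<and> g \<in> carrier_mat (b div L) c \<and>
     (\<forall>e\<in>elements_mat f. degree e \<le> L + T - 1) \<and> (\<forall>e\<in>elements_mat g. degree e \<le> L + T - 1) \<and>
     (\<forall>l\<in>{1..L}. eval_pm (\<alpha> l) f = col_block A L l \<and> eval_pm (\<alpha> l) g = row_block B L l) \<and>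
     (\<forall>j\<in>{1..T}. eval_pm (\<alpha> (L + j)) f = R j \<and> eval_pm (\<alpha> (L + j)) g = S j)
     \<longrightarrow> Dec (map (\<lambda>j. map_mat (tr UNIV (ftp_F F0 \<alpha> L i))
                 ((ftp_v \<alpha> n (L + j) * ftp_k \<alpha> L n (N i) i (\<alpha> (L + j)))
                    \<cdot>\<^sub>m eval_pm (\<alpha> (L + j)) (f * g)))
              [1..<N i + 1])
         = col_block A L i * row_block B L i"
proof -
  obtain r mm where r: "prime r" "mm > 0" "q0 = r ^ mm" using q0_pp by blast
  have r2: "r \<ge> 2" using prime_ge_2_nat[OF r(1)] .
  have "r ^ 1 \<le> r ^ mm" using r(2) r2 by (intro power_increasing) auto
  then have q02: "q0 \<ge> 2" using r(3) r2 by simp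
  have injp: "inj_on p {1..L}"
  proof (rule inj_onI)
    fix x y assume xy: "x \<in> {1..L}" "y \<in> {1..L}" "p x = p y"
    show "x = y"
    proof (rule ccontr)
      assume "x \<noteq> y"
      then have "x < y \<or> y < x" by auto
      then show False using incr xy by (metis atLeastAtMost_iff less_irrefl)
    qed
  qed
  have p2: "p l \<ge> 2" if "l \<in> {1..L}" for l using primes that prime_ge_2_nat by blast
  have notF0: "\<alpha> l \<notin> F0" if "l \<in> {1..L}" for l
    using not_in_F0[OF F0(1)] alpha_deg p2 that by simp
  have NiL: "N i \<le> N L"
  proof -
    have "p i \<le> p L" using incr i by (cases "i = L") (auto simp: less_imp_le)
    then show ?thesis using N_def i LT by simp
  qed
  have inj: "inj_on \<alpha> {1..n}"
  proof (rule inj_onI)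
    fix x y assume x: "x \<in> {1..n}" and y: "y \<in> {1..n}" and e: "\<alpha> x = \<alpha> y"
    show "x = y"
    proof (cases "x \<le> L")
      case xL: True
      show ?thesis
      proof (cases "y \<le> L")
        case True
        then have "p x = p y" using alpha_deg x y xL e by (metis atLeastAtMost_iff)
        then show ?thesis using inj_onD[OF injp] x y xL True by simp
      next
        case False
        then have "\<alpha> y \<in> F0" using alpha_F0 y by simp
        then show ?thesis using notF0[of x] x xL e by simp
      qed
    next
      case xL: False
      show ?thesis
      proof (cases "y \<le> L")
        case True
        have "\<alpha> x \<in> F0" using alpha_F0 x xL by simp
        then show ?thesis using notF0[of y] y True e by simp
      next
        case False
        then show ?thesis using inj_onD[OF alpha_dist] x y xL e by simp
      qed
    qed
  qed
  have KU: "field_gen F0 (\<alpha> ` {1..L}) = UNIV"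
    by (rule gen_all_UNIV[OF F0(1) F0(2) q02 q primes injp alpha_deg])
  define Fi where "Fi = ftp_F F0 \<alpha> L i"
  have Fi: "is_subfield Fi" unfolding Fi_def ftp_F_def by (rule field_gen_sf)
  have F0Fi: "F0 \<subseteq> Fi" unfolding Fi_def ftp_F_def by (rule field_gen_K)
  have aFi: "\<alpha> l \<in> Fi" if "l \<in> {1..L} - {i}" for l
    using field_gen_S[of "\<alpha> ` ({1..L} - {i})" F0] that unfolding Fi_def ftp_F_def by blast
  have all: "E = UNIV" if E: "is_subfield E" "Fi \<subseteq> E" "\<alpha> i \<in> E" for E
  proof -
    have "\<alpha> ` {1..L} \<subseteq> E"
    proof
      fix x assume "x \<in> \<alpha> ` {1..L}"
      then obtain l where l: "l \<in> {1..L}" "x = \<alpha> l" by blast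
      show "x \<in> E" using l aFi[of l] E by (cases "l = i") auto
    qed
    then have "field_gen F0 (\<alpha> ` {1..L}) \<subseteq> E" using field_gen_least[OF E(1)] F0Fi E(2) by blast
    then show ?thesis using KU by auto
  qed
  have spU: "spanp Fi (\<alpha> i) (p i) = UNIV"
    by (rule span_UNIV[OF F0(1) Fi F0Fi _ p2[OF i] all]) (use alpha_deg i in auto)
  have cU: "card (UNIV :: 'a set) = r ^ (mm * (\<Prod>l\<in>{1..L}. p l))"
    using q r(3) by (simp add: power_mult)
  have prC: "prime CHAR('a)" using char_facts[OF Fi r(1) cU] by blast
  obtain jj where cFi: "card Fi = CHAR('a) ^ jj" using char_facts[OF Fi r(1) cU] by blast
  have nLi: "L + N i \<le> n" using NiL n_def by simp
  have UFi: "\<forall>j\<in>{L+1..L+N i}. \<alpha> j \<in> Fi" using alpha_F0 nLi F0Fi by auto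
  have pd: "p i + 2 * (L + T - 1) \<le> N i" using N_def i LT by simp
  define resp where "resp fg = map (\<lambda>j. map_mat (tr UNIV Fi)
                 ((ftp_v \<alpha> n (L + j) * ftp_k \<alpha> L n (N i) i (\<alpha> (L + j)))
                    \<cdot>\<^sub>m eval_pm (\<alpha> (L + j)) fg)) [1..<N i + 1]" for fg
  define valid where "valid f g \<longleftrightarrow> f \<in> carrier_mat a (b div L) \<and> g \<in> carrier_mat (b div L) c \<and>
     (\<forall>e\<in>elements_mat f. degree e \<le> L + T - 1) \<and> (\<forall>e\<in>elements_mat g. degree e \<le> L + T - 1)"
    for f g :: "'a poly mat"
  have entry: "(f * g) $$ (x, y) = (\<Sum>k<b div L. f $$ (x, k) * g $$ (k, y))"
    if "f \<in> carrier_mat a (b div L)" "g \<in> carrier_mat (b div L) c" "x < a" "y < c" for f g x y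
    using that by (simp add: scalar_prod_def atLeast0LessThan)
  have degfg: "degree ((f * g) $$ (x, y)) \<le> 2 * (L + T - 1)"
    if v: "valid f g" and xy: "x < a" "y < c" for f g x y
  proof -
    have fc: "f \<in> carrier_mat a (b div L)" "g \<in> carrier_mat (b div L) c" using v unfolding valid_def by auto
    show ?thesis unfolding entry[OF fc xy]
    proof (rule degree_sum_le)
      fix k assume "k \<in> {..<b div L}"
      then have "f $$ (x, k) \<in> elements_mat f" "g $$ (k, y) \<in> elements_mat g"
        using fc xy by (auto intro!: elements_matI)
      then have "degree (f $$ (x, k)) \<le> L + T - 1" "degree (g $$ (k, y)) \<le> L + T - 1"
        using v unfolding valid_def by auto
      then show "degree (f $$ (x, k) * g $$ (k, y)) \<le> 2 * (L + T - 1)"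
        using degree_mult_le[of "f $$ (x, k)" "g $$ (k, y)"] by linarith
    qed simp
  qed
  have uniq: "eval_pm (\<alpha> i) (f * g) = eval_pm (\<alpha> i) (f' * g')"
    if v: "valid f g" "valid f' g'" and rs: "resp (f * g) = resp (f' * g')" for f g f' g'
  proof -
    have fc: "f \<in> carrier_mat a (b div L)" "g \<in> carrier_mat (b div L) c"
      "f' \<in> carrier_mat a (b div L)" "g' \<in> carrier_mat (b div L) c" using v unfolding valid_def by auto
    have fgc: "f * g \<in> carrier_mat a c" "f' * g' \<in> carrier_mat a c" using fc by auto
    have dims: "dim_row (f * g) = a" "dim_col (f * g) = c" "dim_row (f' * g') = a" "dim_col (f' * g') = c"
      using fgc by auto
    show ?thesis
    proof (rule eq_matI)
      show "dim_row (eval_pm (\<alpha> i) (f * g)) = dim_row (eval_pm (\<alpha> i) (f' * g'))"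
        using fc by (simp add: eval_pm_def)
      show "dim_col (eval_pm (\<alpha> i) (f * g)) = dim_col (eval_pm (\<alpha> i) (f' * g'))"
        using fc by (simp add: eval_pm_def)
      fix x y assume "x < dim_row (eval_pm (\<alpha> i) (f' * g'))" "y < dim_col (eval_pm (\<alpha> i) (f' * g'))"
      then have xy: "x < a" "y < c" using fc by (auto simp: eval_pm_def)
      define H where "H = (f * g) $$ (x, y) - (f' * g') $$ (x, y)"
      have degH: "degree H \<le> 2 * (L + T - 1)"
        unfolding H_def using degree_diff_le[OF degfg[OF v(1) xy] degfg[OF v(2) xy]] .
      have respH: "\<forall>j\<in>{L+1..L+N i}. tr UNIV Fi (ftp_v \<alpha> n j * ftp_k \<alpha> L n (N i) i (\<alpha> j) * poly H (\<alpha> j)) = 0"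
      proof
        fix j assume j: "j \<in> {L+1..L+N i}"
        define j' where "j' = j - L"
        have j': "j' \<in> set [1..<N i + 1]" "j = L + j'" using j unfolding j'_def by auto
        define w where "w = ftp_v \<alpha> n j * ftp_k \<alpha> L n (N i) i (\<alpha> j)"
        have "map_mat (tr UNIV Fi) (w \<cdot>\<^sub>m eval_pm (\<alpha> j) (f * g)) =
              map_mat (tr UNIV Fi) (w \<cdot>\<^sub>m eval_pm (\<alpha> j) (f' * g'))"
        proof -
          have "\<forall>x\<in>set [1..<N i + 1]. map_mat (tr UNIV Fi)
                 ((ftp_v \<alpha> n (L + x) * ftp_k \<alpha> L n (N i) i (\<alpha> (L + x)))
                    \<cdot>\<^sub>m eval_pm (\<alpha> (L + x)) (f * g)) = map_mat (tr UNIV Fi)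
                 ((ftp_v \<alpha> n (L + x) * ftp_k \<alpha> L n (N i) i (\<alpha> (L + x)))
                    \<cdot>\<^sub>m eval_pm (\<alpha> (L + x)) (f' * g'))"
            using rs unfolding resp_def map_eq_conv by blast
          then show ?thesis using j'(1) unfolding w_def j'(2) by blast
        qed
        then have "map_mat (tr UNIV Fi) (w \<cdot>\<^sub>m eval_pm (\<alpha> j) (f * g)) $$ (x, y) =
              map_mat (tr UNIV Fi) (w \<cdot>\<^sub>m eval_pm (\<alpha> j) (f' * g')) $$ (x, y)" by simp
        then have e: "tr UNIV Fi (w * poly ((f * g) $$ (x, y)) (\<alpha> j)) =
                   tr UNIV Fi (w * poly ((f' * g') $$ (x, y)) (\<alpha> j))"
          using dims xy by (simp add: eval_pm_def)
        have "tr UNIV Fi (w * poly H (\<alpha> j)) =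
              tr UNIV Fi (w * poly ((f * g) $$ (x, y)) (\<alpha> j) + - (w * poly ((f' * g') $$ (x, y)) (\<alpha> j)))"
          unfolding H_def by (simp add: algebra_simps)
        also have "\<dots> = 0" unfolding tr_add[OF Fi prC cFi] tr_uminus[OF Fi prC cFi] e by simp
        finally show "tr UNIV Fi (ftp_v \<alpha> n j * ftp_k \<alpha> L n (N i) i (\<alpha> j) * poly H (\<alpha> j)) = 0"
          unfolding w_def .
      qed
      have "poly H (\<alpha> i) = 0"
        by (rule core[OF _ _ nLi inj Fi prC cFi UFi spU degH pd respH]) (use i in auto)
      then show "eval_pm (\<alpha> i) (f * g) $$ (x, y) = eval_pm (\<alpha> i) (f' * g') $$ (x, y)"
        using xy dims unfolding H_def by (simp add: eval_pm_def)
    qed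
  qed
  define Dec where "Dec xs = (let P = (SOME P. valid (fst P) (snd P) \<and> resp (fst P * snd P) = xs)
                              in eval_pm (\<alpha> i) (fst P * snd P))" for xs
  show ?thesis
  proof (intro exI[of _ Dec] allI impI)
    fix A B R S f g
    assume h: "A \<in> carrier_mat a b \<and> B \<in> carrier_mat b c \<and>
     (\<forall>j\<in>{1..T}. R j \<in> carrier_mat a (b div L) \<and> S j \<in> carrier_mat (b div L) c) \<and>
     f \<in> carrier_mat a (b div L) \<and> g \<in> carrier_mat (b div L) c \<and>
     (\<forall>e\<in>elements_mat f. degree e \<le> L + T - 1) \<and> (\<forall>e\<in>elements_mat g. degree e \<le> L + T - 1) \<and>
     (\<forall>l\<in>{1..L}. eval_pm (\<alpha> l) f = col_block A L l \<and> eval_pm (\<alpha> l) g = row_block B L l) \<and>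
     (\<forall>j\<in>{1..T}. eval_pm (\<alpha> (L + j)) f = R j \<and> eval_pm (\<alpha> (L + j)) g = S j)"
    have v: "valid f g" unfolding valid_def using h by blast
    define P where "P = (SOME P. valid (fst P) (snd P) \<and> resp (fst P * snd P) = resp (f * g))"
    have "valid (fst P) (snd P) \<and> resp (fst P * snd P) = resp (f * g)"
      unfolding P_def by (rule someI[of _ "(f, g)"]) (use v in simp)
    then have "eval_pm (\<alpha> i) (fst P * snd P) = eval_pm (\<alpha> i) (f * g)"
      using uniq v by blast
    then have D: "Dec (resp (f * g)) = eval_pm (\<alpha> i) (f * g)" unfolding Dec_def P_def[symmetric] by simp
    have fc: "f \<in> carrier_mat a (b div L)" "g \<in> carrier_mat (b div L) c" using h by auto
    have "eval_pm (\<alpha> i) (f * g) = eval_pm (\<alpha> i) f * eval_pm (\<alpha> i) g"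
    proof (rule eq_matI)
      fix x y assume "x < dim_row (eval_pm (\<alpha> i) f * eval_pm (\<alpha> i) g)"
        "y < dim_col (eval_pm (\<alpha> i) f * eval_pm (\<alpha> i) g)"
      then have xy: "x < a" "y < c" using fc by (auto simp: eval_pm_def)
      show "eval_pm (\<alpha> i) (f * g) $$ (x, y) = (eval_pm (\<alpha> i) f * eval_pm (\<alpha> i) g) $$ (x, y)"
        using xy fc by (simp add: eval_pm_def scalar_prod_def poly_sum atLeast0LessThan)
    qed (use fc in \<open>auto simp: eval_pm_def\<close>)
    also have "\<dots> = col_block A L i * row_block B L i" using h i by simp
    finally show "Dec (map (\<lambda>j. map_mat (tr UNIV (ftp_F F0 \<alpha> L i))
                 ((ftp_v \<alpha> n (L + j) * ftp_k \<alpha> L n (N i) i (\<alpha> (L + j)))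
                    \<cdot>\<^sub>m eval_pm (\<alpha> (L + j)) (f * g)))
              [1..<N i + 1])
         = col_block A L i * row_block B L i"
      using D unfolding resp_def Fi_def by simp
  qed
qed

end
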